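(* Let $m\le k\le n$ be positive integers and $\mathbf a_1,\dots,\mathbf a_n\in\mathbb R^m$. Let $(\hat{\mathbf x},\hat w)$ be an optimal solution of the convex relaxation $$\max_{\mathbf x,w}\Big\{w:\ w\le \Big[\det\Big(\sum_{i\in[n]}x_i\mathbf a_i\mathbf a_i^\top\Big)\Big]^{1/m},\ \sum_{i\in[n]}x_i=k,\ \mathbf x\in[0,1]^n\Big\}.$$ Let $\mathcal S$ be the random size-$k$ subset of $[n]$ with $$\Pr[\mathcal S=S]=\frac{\prod_{j\in S}\hat x_j}{\sum_{\bar S\subseteq[n],|\bar S|=k}\prod_{i\in\bar S}\hat x_i}\quad\text{for every } S\subseteq[n],\ |S|=k.$$ Then for every $T\subseteq[n]$ with $|T|=m$, $$\Pr[T\subseteq\mathcal S]\ge \frac{1}{g(m,n,k)}\prod_{i\in T}\hat x_i,$$ where $$g(m,n,k)=\max_y\Big\{\sum_{\tau=0}^{m}\frac{\binom{n-m}{k-\tau}}{(n-m)^{m-\tau}\binom{n-m}{k-m}}\cdot\frac{\binom{m}{\tau}}{m^{\tau}}(k-y)^{m-\tau}y^{\tau}:\ \frac{mk}{n}\le y\le m\Big\}.$$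
   Context: $[n]=\{1,\dots,n\}$; binomial coefficients $\binom{a}{b}$ are $0$ when $b>a$ or $b<0$. *)

theory Defs
  imports Complex_Main "Jordan_Normal_Form.Determinant"
begin

definition info_mat :: "nat \<Rightarrow> nat \<Rightarrow> (nat \<Rightarrow> real Matrix.vec) \<Rightarrow> (nat \<Rightarrow> real) \<Rightarrow> real Matrix.mat" where
  "info_mat m n a x = Matrix.mat m m (\<lambda>(r, c). \<Sum>i\<in>{1..n}. x i * (a i $ r) * (a i $ c))"

definition relax_feasible :: "nat \<Rightarrow> nat \<Rightarrow> nat \<Rightarrow> (nat \<Rightarrow> real Matrix.vec) \<Rightarrow> (nat \<Rightarrow> real) \<Rightarrow> real \<Rightarrow> bool" where
  "relax_feasible m n k a x w \<longleftrightarrow>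
     w \<le> root m (det (info_mat m n a x)) \<and>
     (\<Sum>i\<in>{1..n}. x i) = real k \<and>
     (\<forall>i\<in>{1..n}. 0 \<le> x i \<and> x i \<le> 1)"

definition relax_optimal :: "nat \<Rightarrow> nat \<Rightarrow> nat \<Rightarrow> (nat \<Rightarrow> real Matrix.vec) \<Rightarrow> (nat \<Rightarrow> real) \<Rightarrow> real \<Rightarrow> bool" where
  "relax_optimal m n k a x w \<longleftrightarrow>
     relax_feasible m n k a x w \<and> (\<forall>x' w'. relax_feasible m n k a x' w' \<longrightarrow> w' \<le> w)"

definition prob_contains :: "nat \<Rightarrow> nat \<Rightarrow> (nat \<Rightarrow> real) \<Rightarrow> nat set \<Rightarrow> real" where
  "prob_contains n k x T =
     (\<Sum>S\<in>{S. S \<subseteq> {1..n} \<and> card S = k \<and> T \<subseteq> S}. \<Prod>j\<in>S. x j) /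
     (\<Sum>S\<in>{S. S \<subseteq> {1..n} \<and> card S = k}. \<Prod>i\<in>S. x i)"

definition g_fun :: "nat \<Rightarrow> nat \<Rightarrow> nat \<Rightarrow> real" where
  "g_fun m n k = Sup ((\<lambda>y::real. \<Sum>\<tau>=0..m.
       real ((n - m) choose (k - \<tau>)) / (real (n - m) ^ (m - \<tau>) * real ((n - m) choose (k - m)))
       * (real (m choose \<tau>) / real m ^ \<tau>) * (real k - y) ^ (m - \<tau>) * y ^ \<tau>)
     ` {real m * real k / real n .. real m})"

end

theory Submission
  imports Defs
begin


definition esym :: "nat set \<Rightarrow> (nat \<Rightarrow> real) \<Rightarrow> nat \<Rightarrow> real" where
  "esym A x j = (\<Sum>S\<in>{S. S \<subseteq> A \<and> card S = j}. \<Prod>i\<in>S. x i)"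

lemma esym_0: "finite A \<Longrightarrow> esym A x 0 = 1"
proof -
  assume f: "finite A"
  have "{S. S \<subseteq> A \<and> card S = 0} = {{}}"
  proof (intro equalityI subsetI)
    fix S assume S: "S \<in> {S. S \<subseteq> A \<and> card S = 0}"
    then have "finite S" using f finite_subset by blast
    with S show "S \<in> {{}}" by simp
  qed simp
  thus ?thesis by (simp add: esym_def)
qed

lemma esym_big: "finite A \<Longrightarrow> card A < j \<Longrightarrow> esym A x j = 0"
proof -
  assume f: "finite A" "card A < j"
  have e: "{S. S \<subseteq> A \<and> card S = j} = {}"
  proof (rule ccontr)
    assume "{S. S \<subseteq> A \<and> card S = j} \<noteq> {}"
    then obtain S where S: "S \<subseteq> A" "card S = j" by blast
    have "card S \<le> card A" using card_mono[OF f(1) S(1)] .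
    with S f show False by simp
  qed
  show ?thesis unfolding esym_def e by simp
qed

lemma esym_nonneg: "(\<And>i. i \<in> A \<Longrightarrow> 0 \<le> x i) \<Longrightarrow> 0 \<le> esym A x j"
  unfolding esym_def by (intro sum_nonneg prod_nonneg) auto

lemma esym_insert:
  assumes f: "finite A" and a: "a \<notin> A"
  shows "esym (insert a A) x (Suc j) = esym A x (Suc j) + x a * esym A x j"
proof -
  have split: "{S. S \<subseteq> insert a A \<and> card S = Suc j} =
     {S. S \<subseteq> A \<and> card S = Suc j} \<union> insert a ` {S. S \<subseteq> A \<and> card S = j}"
  proof (intro equalityI subsetI)
    fix S assume S: "S \<in> {S. S \<subseteq> insert a A \<and> card S = Suc j}"
    show "S \<in> {S. S \<subseteq> A \<and> card S = Suc j} \<union> insert a ` {S. S \<subseteq> A \<and> card S = j}"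
    proof (cases "a \<in> S")
      case True
      have fiA: "finite (insert a A)" using f by simp
      have fS: "finite S" using S finite_subset[OF _ fiA] by blast
      have "S = insert a (S - {a})" using True by auto
      moreover have "S - {a} \<subseteq> A" "card (S - {a}) = j" using S True fS by auto
      ultimately show ?thesis by blast
    next
      case False thus ?thesis using S by auto
    qed
  next
    fix S assume S: "S \<in> {S. S \<subseteq> A \<and> card S = Suc j} \<union> insert a ` {S. S \<subseteq> A \<and> card S = j}"
    show "S \<in> {S. S \<subseteq> insert a A \<and> card S = Suc j}"
    proof (cases "S \<in> {S. S \<subseteq> A \<and> card S = Suc j}")
      case True thus ?thesis by auto
    next
      case False
      then obtain S0 where S0: "S = insert a S0" "S0 \<subseteq> A" "card S0 = j" using S by auto
      have "finite S0" using S0 f finite_subset by blast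
      moreover have "a \<notin> S0" using S0 a by auto
      ultimately show ?thesis using S0 by auto
    qed
  qed
  have disj: "{S. S \<subseteq> A \<and> card S = Suc j} \<inter> insert a ` {S. S \<subseteq> A \<and> card S = j} = {}"
  proof (rule equals0I)
    fix S assume "S \<in> {S. S \<subseteq> A \<and> card S = Suc j} \<inter> insert a ` {S. S \<subseteq> A \<and> card S = j}"
    then have "a \<in> S" "S \<subseteq> A" by auto
    with a show False by auto
  qed
  have fin1: "finite {S. S \<subseteq> A \<and> card S = Suc j}" by (rule finite_subset[of _ "Pow A"]) (use f in auto)
  have fin2: "finite {S. S \<subseteq> A \<and> card S = j}" by (rule finite_subset[of _ "Pow A"]) (use f in auto)
  have inj: "inj_on (insert a) {S. S \<subseteq> A \<and> card S = j}"
  proof (rule inj_onI)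
    fix S T assume S: "S \<in> {S. S \<subseteq> A \<and> card S = j}" and T: "T \<in> {S. S \<subseteq> A \<and> card S = j}"
      and eq: "insert a S = insert a T"
    have "a \<notin> S" "a \<notin> T" using S T a by auto
    then have "S = insert a S - {a}" "T = insert a T - {a}" by auto
    then show "S = T" using eq by simp
  qed
  have "esym (insert a A) x (Suc j) = esym A x (Suc j) +
      (\<Sum>S\<in>insert a ` {S. S \<subseteq> A \<and> card S = j}. \<Prod>i\<in>S. x i)"
    unfolding esym_def split using fin1 fin2 disj by (simp add: sum.union_disjoint)
  also have "(\<Sum>S\<in>insert a ` {S. S \<subseteq> A \<and> card S = j}. \<Prod>i\<in>S. x i)
     = (\<Sum>S\<in>{S. S \<subseteq> A \<and> card S = j}. \<Prod>i\<in>insert a S. x i)"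
    using inj by (simp add: sum.reindex)
  also have "\<dots> = (\<Sum>S\<in>{S. S \<subseteq> A \<and> card S = j}. x a * (\<Prod>i\<in>S. x i))"
  proof (intro sum.cong refl)
    fix S assume S: "S \<in> {S. S \<subseteq> A \<and> card S = j}"
    have "finite S" using S f finite_subset by auto
    moreover have "a \<notin> S" using S a by auto
    ultimately show "(\<Prod>i\<in>insert a S. x i) = x a * (\<Prod>i\<in>S. x i)" by simp
  qed
  also have "\<dots> = x a * esym A x j" by (simp add: esym_def sum_distrib_left)
  finally show ?thesis .
qed

lemma esym_empty_Suc: "esym {} x (Suc j) = 0"
  by (rule esym_big) auto

lemma esym_I3:
  assumes "finite A"
  shows "real (Suc r) * esym A x (Suc r) = (\<Sum>i\<in>A. x i * esym (A - {i}) x r)"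
  using assms
proof (induction A arbitrary: r rule: finite_induct)
  case empty
  then show ?case by (simp add: esym_empty_Suc)
next
  case (insert a A)
  have rem: "insert a A - {i} = insert a (A - {i})" if "i \<in> A" for i
    using that insert.hyps by auto
  have s1: "(\<Sum>i\<in>insert a A. x i * esym (insert a A - {i}) x r) =
      x a * esym A x r + (\<Sum>i\<in>A. x i * esym (insert a (A - {i})) x r)"
    using insert.hyps rem by (simp add: insert_Diff_if)
  show ?case
  proof (cases r)
    case 0
    have "(\<Sum>i\<in>A. x i * esym (insert a (A - {i})) x r) = (\<Sum>i\<in>A. x i * esym (A - {i}) x r)"
      using insert.hyps 0 by (simp add: esym_0)
    then show ?thesis
      using s1 insert.IH[of 0] insert.hyps 0 esym_insert[of A a x 0]
      by (simp add: esym_0 algebra_simps)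
  next
    case (Suc r')
    have "(\<Sum>i\<in>A. x i * esym (insert a (A - {i})) x r) =
       (\<Sum>i\<in>A. x i * esym (A - {i}) x r) + x a * (\<Sum>i\<in>A. x i * esym (A - {i}) x r')"
      using insert.hyps Suc
      by (simp add: esym_insert sum.distrib sum_distrib_left algebra_simps)
    also have "\<dots> = real (Suc r) * esym A x (Suc r) + x a * (real r * esym A x r)"
      using insert.IH[of r] insert.IH[of r'] Suc by simp
    finally show ?thesis
      using s1 insert.hyps esym_insert[of A a x r] by (simp add: algebra_simps)
  qed
qed

lemma esym_I1:
  assumes "finite B"
  shows "(\<Sum>l\<in>B. esym (B - {l}) x r) = (real (card B) - real r) * esym B x r"
  using assms
proof (induction B arbitrary: r rule: finite_induct)
  case empty
  then show ?case by (cases r) (simp_all add: esym_0 esym_empty_Suc)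
next
  case (insert a B)
  have rem: "insert a B - {i} = insert a (B - {i})" if "i \<in> B" for i
    using that insert.hyps by auto
  have s1: "(\<Sum>l\<in>insert a B. esym (insert a B - {l}) x r) =
      esym B x r + (\<Sum>l\<in>B. esym (insert a (B - {l})) x r)"
    using insert.hyps rem by (simp add: insert_Diff_if)
  show ?case
  proof (cases r)
    case 0
    then show ?thesis using s1 insert.hyps by (simp add: esym_0)
  next
    case (Suc r')
    have "(\<Sum>l\<in>B. esym (insert a (B - {l})) x r) =
       (\<Sum>l\<in>B. esym (B - {l}) x r) + x a * (\<Sum>l\<in>B. esym (B - {l}) x r')"
      using insert.hyps Suc
      by (simp add: esym_insert sum.distrib sum_distrib_left)
    also have "\<dots> = (real (card B) - real r) * esym B x r + x a * ((real (card B) - real r') * esym B x r')"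
      using insert.IH[of r] insert.IH[of r'] by simp
    finally show ?thesis
      using s1 insert.hyps esym_insert[of B a x r'] Suc by (simp add: algebra_simps)
  qed
qed

lemma esym_decomp:
  assumes "finite A" "finite B" "A \<inter> B = {}"
  shows "esym (A \<union> B) x k = (\<Sum>t\<le>k. esym A x t * esym B x (k - t))"
  using assms
proof (induction A arbitrary: k rule: finite_induct)
  case empty
  have "(\<Sum>t\<le>k. esym {} x t * esym B x (k - t)) = (\<Sum>t\<in>{0}. esym {} x t * esym B x (k - t))"
    by (rule sum.mono_neutral_right) (auto simp: esym_big)
  then show ?case by (simp add: esym_0)
next
  case (insert a A)
  have aB: "a \<notin> A \<union> B" using insert by auto
  have fAB: "finite (A \<union> B)" using insert by auto
  have IH: "\<And>k. esym (A \<union> B) x k = (\<Sum>t\<le>k. esym A x t * esym B x (k - t))"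
    using insert by auto
  show ?case
  proof (cases k)
    case 0
    then show ?thesis using insert fAB by (simp add: esym_0)
  next
    case (Suc k')
    have "esym (insert a A \<union> B) x k = esym (A \<union> B) x k + x a * esym (A \<union> B) x k'"
      using esym_insert[OF fAB aB] Suc by simp
    also have "\<dots> = (\<Sum>t\<le>k. esym A x t * esym B x (k - t)) + x a * (\<Sum>t\<le>k'. esym A x t * esym B x (k' - t))"
      using IH by simp
    also have "\<dots> = (\<Sum>t\<le>k. esym (insert a A) x t * esym B x (k - t))"
    proof -
      have "(\<Sum>t\<le>k. esym (insert a A) x t * esym B x (k - t)) =
          esym (insert a A) x 0 * esym B x k + (\<Sum>t\<le>k'. esym (insert a A) x (Suc t) * esym B x (k' - t))"
        unfolding Suc sum.atMost_Suc_shift by simp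
      also have "\<dots> = esym A x 0 * esym B x k + (\<Sum>t\<le>k'. esym A x (Suc t) * esym B x (k' - t))
           + x a * (\<Sum>t\<le>k'. esym A x t * esym B x (k' - t))"
        using insert.hyps by (simp add: esym_0 esym_insert algebra_simps sum.distrib sum_distrib_left)
      also have "esym A x 0 * esym B x k + (\<Sum>t\<le>k'. esym A x (Suc t) * esym B x (k' - t))
          = (\<Sum>t\<le>k. esym A x t * esym B x (k - t))"
        unfolding Suc sum.atMost_Suc_shift by simp
      finally show ?thesis by simp
    qed
    finally show ?thesis .
  qed
qed

lemma swap_offdiag:
  assumes "finite A"
  shows "(\<Sum>i\<in>A. \<Sum>l\<in>A - {i}. g i l) = (\<Sum>i\<in>A. \<Sum>l\<in>A - {i}. (g l i :: real))"
proof -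
  have e: "\<And>h i. i \<in> A \<Longrightarrow> (\<Sum>l\<in>A - {i}. h i l) = (\<Sum>l\<in>A. h i l) - (h i i :: real)"
    using assms by (simp add: sum_diff1)
  have "(\<Sum>i\<in>A. \<Sum>l\<in>A - {i}. g i l) = (\<Sum>i\<in>A. \<Sum>l\<in>A. g i l) - (\<Sum>i\<in>A. g i i)"
    using e[of _ g] by (simp add: sum_subtractf)
  also have "\<dots> = (\<Sum>i\<in>A. \<Sum>l\<in>A. g l i) - (\<Sum>i\<in>A. g i i)"
    by (subst sum.swap) simp
  also have "\<dots> = (\<Sum>i\<in>A. \<Sum>l\<in>A - {i}. g l i)"
    using e[of _ "\<lambda>i l. g l i"] by (simp add: sum_subtractf)
  finally show ?thesis .
qed

lemma sym_ineq:
  assumes "finite A" and sym: "\<And>i l. w i l = w l i" and nn: "\<And>i l. 0 \<le> (w i l :: real)"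
  shows "(\<Sum>i\<in>A. \<Sum>l\<in>A - {i}. x i * x l * w i l) \<le> (\<Sum>i\<in>A. \<Sum>l\<in>A - {i}. (x i)^2 * w i l)"
proof -
  have "2 * (\<Sum>i\<in>A. \<Sum>l\<in>A - {i}. x i * x l * w i l) = (\<Sum>i\<in>A. \<Sum>l\<in>A - {i}. 2 * (x i * x l * w i l))"
    by (simp add: sum_distrib_left)
  also have "\<dots> \<le> (\<Sum>i\<in>A. \<Sum>l\<in>A - {i}. (x i)^2 * w i l + (x l)^2 * w i l)"
  proof (intro sum_mono)
    fix i l
    have "0 \<le> (x i - x l)^2 * w i l" using nn by simp
    thus "2 * (x i * x l * w i l) \<le> (x i)^2 * w i l + (x l)^2 * w i l"
      by (simp add: power2_eq_square algebra_simps)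
  qed
  also have "\<dots> = (\<Sum>i\<in>A. \<Sum>l\<in>A - {i}. (x i)^2 * w i l) + (\<Sum>i\<in>A. \<Sum>l\<in>A - {i}. (x l)^2 * w l i)"
    by (simp add: sum.distrib sym)
  also have "(\<Sum>i\<in>A. \<Sum>l\<in>A - {i}. (x l)^2 * w l i) = (\<Sum>i\<in>A. \<Sum>l\<in>A - {i}. (x i)^2 * w i l)"
    using swap_offdiag[OF assms(1), of "\<lambda>i l. (x l)^2 * w l i"] by simp
  finally show ?thesis by simp
qed

lemma esym_remove:
  assumes "finite A" "i \<in> A"
  shows "esym A x (Suc r) = esym (A - {i}) x (Suc r) + x i * esym (A - {i}) x r"
proof -
  have "A = insert i (A - {i})" using assms by auto
  then have "esym A x (Suc r) = esym (insert i (A - {i})) x (Suc r)" by simp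
  also have "\<dots> = esym (A - {i}) x (Suc r) + x i * esym (A - {i}) x r"
    using assms by (intro esym_insert) auto
  finally show ?thesis .
qed

lemma newton_weak:
  assumes fA: "finite A" and nn: "\<And>i. i \<in> A \<Longrightarrow> 0 \<le> x i"
  shows "real (card A) * real (Suc (Suc r)) * esym A x (Suc (Suc r))
     \<le> (real (card A) - real r - 1) * (\<Sum>i\<in>A. x i) * esym A x (Suc r)"
proof -
  define N where "N = real (card A)"
  define E2 where "E2 = esym A x (Suc (Suc r))"
  define Q where "Q = (\<Sum>i\<in>A. (x i)^2 * esym (A - {i}) x r)"
  define P1 where "P1 = (\<Sum>i\<in>A. x i * esym (A - {i}) x (Suc r))"
  have h1: "(\<Sum>i\<in>A. x i) * esym A x (Suc r) = P1 + Q"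
  proof -
    have "(\<Sum>i\<in>A. x i) * esym A x (Suc r) = (\<Sum>i\<in>A. x i * esym A x (Suc r))"
      by (simp add: sum_distrib_right)
    also have "\<dots> = (\<Sum>i\<in>A. x i * esym (A - {i}) x (Suc r) + (x i)^2 * esym (A - {i}) x r)"
      using fA by (intro sum.cong refl) (simp add: esym_remove power2_eq_square algebra_simps)
    finally show ?thesis by (simp add: P1_def Q_def sum.distrib)
  qed
  have h2: "real (Suc (Suc r)) * E2 = P1"
    unfolding E2_def P1_def using esym_I3[OF fA, of "Suc r" x] by simp
  have h3: "real (Suc r) * P1 = (\<Sum>i\<in>A. \<Sum>l\<in>A - {i}. x i * x l * esym (A - {i} - {l}) x r)"
  proof -
    have "real (Suc r) * P1 = (\<Sum>i\<in>A. x i * (real (Suc r) * esym (A - {i}) x (Suc r)))"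
      unfolding P1_def sum_distrib_left by (simp only: mult_ac)
    also have "\<dots> = (\<Sum>i\<in>A. x i * (\<Sum>l\<in>A - {i}. x l * esym (A - {i} - {l}) x r))"
      using fA by (intro sum.cong refl) (simp only: esym_I3[OF finite_Diff[OF fA]])
    also have "\<dots> = (\<Sum>i\<in>A. \<Sum>l\<in>A - {i}. x i * x l * esym (A - {i} - {l}) x r)"
      unfolding sum_distrib_left by (simp only: mult_ac)
    finally show ?thesis .
  qed
  have h4: "(\<Sum>i\<in>A. \<Sum>l\<in>A - {i}. x i * x l * esym (A - {i} - {l}) x r)
      \<le> (\<Sum>i\<in>A. \<Sum>l\<in>A - {i}. (x i)^2 * esym (A - {i} - {l}) x r)"
  proof -
    define w where "w i l = esym (A - {i} - {l}) x r" for i l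
    have ws: "w i l = w l i" for i l
    proof -
      have "A - {i} - {l} = A - {l} - {i}" by blast
      thus ?thesis unfolding w_def by simp
    qed
    have wn: "0 \<le> w i l" for i l unfolding w_def using nn by (intro esym_nonneg) auto
    show ?thesis using sym_ineq[OF fA, of w x, OF ws wn] unfolding w_def by simp
  qed
  have h5: "(\<Sum>i\<in>A. \<Sum>l\<in>A - {i}. (x i)^2 * esym (A - {i} - {l}) x r) = (N - 1 - real r) * Q"
  proof -
    have "(\<Sum>i\<in>A. \<Sum>l\<in>A - {i}. (x i)^2 * esym (A - {i} - {l}) x r)
        = (\<Sum>i\<in>A. (x i)^2 * ((N - 1 - real r) * esym (A - {i}) x r))"
    proof (intro sum.cong refl)
      fix i assume i: "i \<in> A"
      have "(\<Sum>l\<in>A - {i}. esym (A - {i} - {l}) x r) = (real (card (A - {i})) - real r) * esym (A - {i}) x r"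
        using fA by (intro esym_I1) auto
      moreover have "real (card (A - {i})) = N - 1"
      proof -
        have cA: "0 < card A" using i fA card_gt_0_iff by blast
        show ?thesis using card_Diff_singleton[OF i] cA N_def by (simp add: of_nat_diff)
      qed
      ultimately show "(\<Sum>l\<in>A - {i}. (x i)^2 * esym (A - {i} - {l}) x r) = (x i)^2 * ((N - 1 - real r) * esym (A - {i}) x r)"
        by (simp add: sum_distrib_left[symmetric])
    qed
    also have "\<dots> = (N - 1 - real r) * Q" unfolding Q_def sum_distrib_left by (simp only: mult_ac)
    finally show ?thesis .
  qed
  have "real (Suc r) * (real (Suc (Suc r)) * E2) \<le> (N - 1 - real r) * Q"
    unfolding h2 h3 h5[symmetric] by (rule h4)
  moreover have "(N - real r - 1) * (P1 + Q) = (N - real r - 1) * (real (Suc (Suc r)) * E2) + (N - 1 - real r) * Q"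
    unfolding h2[symmetric] by (simp add: algebra_simps)
  moreover have "N * real (Suc (Suc r)) * E2 = (N - real r - 1) * (real (Suc (Suc r)) * E2) + real (Suc r) * (real (Suc (Suc r)) * E2)"
    by (simp add: algebra_simps)
  ultimately have ineq: "N * real (Suc (Suc r)) * E2 \<le> (N - real r - 1) * (P1 + Q)"
    by linarith
  have e: "(N - real r - 1) * (\<Sum>i\<in>A. x i) * esym A x (Suc r) = (N - real r - 1) * (P1 + Q)"
    using h1 by (simp only: mult.assoc)
  show ?thesis using ineq e unfolding N_def E2_def by linarith
qed

lemma esym_1: "finite A \<Longrightarrow> esym A x 1 = (\<Sum>i\<in>A. x i)"
  using esym_I3[of A 0 x] by (simp add: esym_0)

lemma absorb0: "Suc i * (M choose Suc i) = (M - i) * (M choose i)"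
  using binomial_absorb_comp[of M i] binomial_absorption[of i M] by simp

lemma frac_le_aux:
  fixes a b c d :: real
  assumes "0 < b" "0 < d" "a * d \<le> c * b"
  shows "a / b \<le> c / d"
  using assms by (simp add: field_simps)

lemma esym_step:
  assumes fA: "finite A" and nn: "\<And>i. i \<in> A \<Longrightarrow> 0 \<le> x i" and l: "Suc l \<le> card A"
  shows "esym A x (Suc l) / real (card A choose Suc l)
     \<le> ((\<Sum>i\<in>A. x i) / real (card A)) * (esym A x l / real (card A choose l))"
proof -
  define N where "N = card A"
  define s where "s = (\<Sum>i\<in>A. x i)"
  have Npos: "0 < N" using l N_def by simp
  have c1: "0 < real (N choose l)" "0 < real (N choose Suc l)" using l N_def by auto
  have key: "real N * real (Suc l) * esym A x (Suc l) \<le> (real N - real l) * s * esym A x l"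
  proof (cases l)
    case 0
    then show ?thesis using fA esym_1[OF fA, of x] by (simp add: esym_0 s_def)
  next
    case (Suc r)
    then show ?thesis using newton_weak[of A x r, OF fA nn] by (simp add: N_def s_def algebra_simps)
  qed
  have bin: "real (Suc l) * real (N choose Suc l) = real (N choose l) * (real N - real l)"
  proof -
    have "Suc l * (N choose Suc l) = (N choose l) * (N - l)"
      using absorb0[of l N] by (simp only: mult.commute)
    hence "real (Suc l * (N choose Suc l)) = real ((N choose l) * (N - l))" by simp
    thus ?thesis using l N_def by (simp add: of_nat_diff algebra_simps)
  qed
  have "esym A x (Suc l) * real N * real (N choose l) * real (Suc l)
       \<le> s * esym A x l * real (N choose Suc l) * real (Suc l)"
  proof -
    have "esym A x (Suc l) * real N * real (N choose l) * real (Suc l) = (real N * real (Suc l) * esym A x (Suc l)) * real (N choose l)"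
      by simp
    also have "\<dots> \<le> ((real N - real l) * s * esym A x l) * real (N choose l)"
      using key c1 by (intro mult_right_mono) auto
    also have "\<dots> = s * esym A x l * (real (Suc l) * real (N choose Suc l))"
      unfolding bin by (simp only: mult_ac)
    finally show ?thesis by (simp only: mult_ac)
  qed
  then have F: "(esym A x (Suc l) * real N * real (N choose l)) * real (Suc l) \<le> (s * esym A x l * real (N choose Suc l)) * real (Suc l)"
    by (simp only: mult_ac)
  have F2: "esym A x (Suc l) * (real N * real (N choose l)) \<le> (s * esym A x l) * real (N choose Suc l)"
    using mult_right_le_imp_le[OF F] by (simp only: mult_ac of_nat_0_less_iff zero_less_Suc simp_thms)
  have "esym A x (Suc l) / real (N choose Suc l) \<le> (s * esym A x l) / (real N * real (N choose l))"
    using frac_le_aux[OF c1(2) _ F2] Npos c1(1) by simp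
  also have "\<dots> = (s / real N) * (esym A x l / real (N choose l))" by simp
  finally show ?thesis unfolding N_def s_def .
qed

lemma esym_ratio:
  assumes fA: "finite A" and nn: "\<And>i. i \<in> A \<Longrightarrow> 0 \<le> x i" and jl: "j \<le> l" and lN: "l \<le> card A"
  shows "esym A x l / real (card A choose l)
     \<le> ((\<Sum>i\<in>A. x i) / real (card A)) ^ (l - j) * (esym A x j / real (card A choose j))"
  using jl lN
proof (induction l rule: dec_induct)
  case base
  then show ?case by simp
next
  case (step l)
  have s0: "0 \<le> (\<Sum>i\<in>A. x i) / real (card A)" using nn by (simp add: sum_nonneg)
  have "esym A x (Suc l) / real (card A choose Suc l)
     \<le> ((\<Sum>i\<in>A. x i) / real (card A)) * (esym A x l / real (card A choose l))"
    using esym_step[OF fA nn step.prems] .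
  also have "\<dots> \<le> ((\<Sum>i\<in>A. x i) / real (card A)) * (((\<Sum>i\<in>A. x i) / real (card A)) ^ (l - j) * (esym A x j / real (card A choose j)))"
    using step.IH step.prems s0 by (intro mult_left_mono) auto
  also have "\<dots> = ((\<Sum>i\<in>A. x i) / real (card A)) ^ (Suc l - j) * (esym A x j / real (card A choose j))"
    using step.hyps by (simp add: Suc_diff_le)
  finally show ?case .
qed



lemma cheb:
  fixes kap :: "nat \<Rightarrow> real"
  assumes "\<And>t. t < M \<Longrightarrow> t < c \<Longrightarrow> 0 \<le> kap t" "\<And>t. t < M \<Longrightarrow> c \<le> t \<Longrightarrow> kap t \<le> 0"
    and r: "0 \<le> r" "r \<le> 1" and tot: "0 \<le> (\<Sum>t<M. kap t)"
  shows "0 \<le> (\<Sum>t<M. kap t * r ^ t)"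
proof -
  have "(\<Sum>t<M. kap t * r ^ c) \<le> (\<Sum>t<M. kap t * r ^ t)"
  proof (intro sum_mono)
    fix t assume tM: "t \<in> {..<M}"
    show "kap t * r ^ c \<le> kap t * r ^ t"
    proof (cases "t < c")
      case True
      then have "r ^ c \<le> r ^ t" using r by (intro power_decreasing) auto
      then show ?thesis using assms(1)[OF _ True] tM by (intro mult_left_mono) auto
    next
      case False
      then have "r ^ t \<le> r ^ c" using r by (intro power_decreasing) auto
      then show ?thesis using assms(2)[of t] False tM by (intro mult_left_mono_neg) auto
    qed
  qed
  moreover have "(\<Sum>t<M. kap t * r ^ c) = (\<Sum>t<M. kap t) * r ^ c" by (simp add: sum_distrib_right)
  moreover have "0 \<le> (\<Sum>t<M. kap t) * r ^ c" using tot r by simp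
  ultimately show ?thesis by linarith
qed

lemma deriv_term:
  fixes h m N k :: real and t :: nat and M :: nat
  assumes "m \<noteq> 0" "N \<noteq> 0"
  shows "((\<lambda>y. h * (y / m) ^ t * ((k - y) / N) ^ (M - t)) has_real_derivative
      h * (real t / m * (y / m) ^ (t - 1) * ((k - y) / N) ^ (M - t)
         - real (M - t) / N * (y / m) ^ t * ((k - y) / N) ^ (M - t - 1))) (at y)"
proof -
  have e1: "((\<lambda>y. y / m) has_real_derivative 1 / m) (at y)"
    using assms by (auto intro!: derivative_eq_intros)
  have e2: "((\<lambda>y. (k - y) / N) has_real_derivative - 1 / N) (at y)"
    using assms by (auto intro!: derivative_eq_intros simp: field_simps)
  have d1: "((\<lambda>y. (y / m) ^ t) has_real_derivative real t * (y / m) ^ (t - 1) * (1 / m)) (at y)"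
    using DERIV_power[OF e1, of t] by (simp add: algebra_simps)
  have d2: "((\<lambda>y. ((k - y) / N) ^ (M - t)) has_real_derivative real (M - t) * ((k - y) / N) ^ (M - t - 1) * (- 1 / N)) (at y)"
    using DERIV_power[OF e2, of "M - t"] by (simp add: algebra_simps)
  have F: "((\<lambda>y. h * ((y / m) ^ t * ((k - y) / N) ^ (M - t))) has_real_derivative
     h * ((real t * (y / m) ^ (t - 1) * (1 / m)) * ((k - y) / N) ^ (M - t) + (real (M - t) * ((k - y) / N) ^ (M - t - 1) * (- 1 / N)) * (y / m) ^ t)) (at y)"
    by (intro DERIV_cmult DERIV_mult d1 d2)
  have eqf: "(\<lambda>y. h * (y / m) ^ t * ((k - y) / N) ^ (M - t)) = (\<lambda>y. h * ((y / m) ^ t * ((k - y) / N) ^ (M - t)))"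
    by (simp add: mult.assoc)
  have eqD: "h * ((real t * (y / m) ^ (t - 1) * (1 / m)) * ((k - y) / N) ^ (M - t) + (real (M - t) * ((k - y) / N) ^ (M - t - 1) * (- 1 / N)) * (y / m) ^ t)
     = h * (real t / m * (y / m) ^ (t - 1) * ((k - y) / N) ^ (M - t)
         - real (M - t) / N * (y / m) ^ t * ((k - y) / N) ^ (M - t - 1))"
    by (simp add: algebra_simps)
  show ?thesis by (subst eqf, rule DERIV_cong[OF F eqD])
qed

lemma absorb: "Suc i * (M choose Suc i) = (M - i) * (M choose i)"
  by (metis binomial_absorb_comp binomial_absorption mult.commute)

locale mono_setup =
  fixes m n k :: nat
  assumes m1: "1 \<le> m" and mk: "m \<le> k" and kn: "k \<le> n" and mn: "m < n"
begin

definition "N = n - m"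
definition "h t = real (m choose t) * real (N choose (k - t))"
definition "phi y = (\<Sum>t\<le>m. h t * (y / real m) ^ t * ((real k - y) / real N) ^ (m - t))"
definition "D y = (\<Sum>t\<le>m. h t * (real t / real m * (y / real m) ^ (t - 1) * ((real k - y) / real N) ^ (m - t)
         - real (m - t) / real N * (y / real m) ^ t * ((real k - y) / real N) ^ (m - t - 1)))"
definition "kap t = real (Suc t) * h (Suc t) / real m - real (m - t) * h t / real N"
definition "sig t = real N * real (k - t) - real m * (real N - real (k - t) + 1)"

lemma Npos: "0 < N" using mn N_def by simp

lemma phi_deriv: "(phi has_real_derivative D y) (at y)"
proof -
  have "((\<lambda>y. \<Sum>t\<le>m. h t * (y / real m) ^ t * ((real k - y) / real N) ^ (m - t)) has_real_derivative D y) (at y)"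
    unfolding D_def
    by (rule DERIV_sum, rule deriv_term) (use m1 Npos in auto)
  thus ?thesis unfolding phi_def[abs_def] by simp
qed

lemma D_eq: "D y = (\<Sum>t<m. kap t * (y / real m) ^ t * ((real k - y) / real N) ^ (m - 1 - t))"
proof -
  obtain m' where m': "m = Suc m'" using m1 by (cases m) auto
  define p where "p = y / real m"
  define q where "q = (real k - y) / real N"
  have A: "(\<Sum>t\<le>m. h t * (real t / real m * p ^ (t - 1) * q ^ (m - t)))
      = (\<Sum>t\<le>m'. real (Suc t) * h (Suc t) / real m * p ^ t * q ^ (m' - t))"
    unfolding m' sum.atMost_Suc_shift by (simp add: algebra_simps)
  have B: "(\<Sum>t\<le>m. h t * (real (m - t) / real N * p ^ t * q ^ (m - t - 1)))
      = (\<Sum>t\<le>m'. real (m - t) * h t / real N * p ^ t * q ^ (m' - t))"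
    unfolding m' sum.atMost_Suc by (simp add: m' algebra_simps)
  have "D y = (\<Sum>t\<le>m. h t * (real t / real m * p ^ (t - 1) * q ^ (m - t)))
       - (\<Sum>t\<le>m. h t * (real (m - t) / real N * p ^ t * q ^ (m - t - 1)))"
    unfolding D_def p_def q_def by (simp add: sum_subtractf right_diff_distrib mult.assoc)
  also have "\<dots> = (\<Sum>t\<le>m'. kap t * p ^ t * q ^ (m' - t))"
    unfolding A B kap_def by (simp add: sum_subtractf left_diff_distrib)
  also have "\<dots> = (\<Sum>t<m. kap t * p ^ t * q ^ (m - 1 - t))"
    using m' by (simp add: lessThan_Suc_atMost)
  finally show ?thesis unfolding p_def q_def .
qed

lemma kap_ident:
  assumes t: "t < m"
  shows "kap t * (real m * real N * real (k - t)) =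
     real (m - t) * real (m choose t) * real (N choose (k - t - 1)) * sig t"
proof -
  obtain i where i: "k - t = Suc i" using t mk by (metis Suc_diff_Suc le_trans less_imp_le_nat order_less_le_trans zero_less_diff Nat.lessE)
  have ki: "k - Suc t = i" using i by simp
  have b1: "real (Suc t) * real (m choose Suc t) = real (m - t) * real (m choose t)"
    using absorb[of t m] by (metis of_nat_mult)
  have b2: "real (Suc i) * real (N choose Suc i) = real (N - i) * real (N choose i)"
    using absorb[of i N] by (metis of_nat_mult)
  have m0: "real m \<noteq> 0" using m1 by simp
  have N0: "real N \<noteq> 0" using Npos by simp
  have k1: "kap t = real (m - t) * real (m choose t) * (real (N choose i) / real m - real (N choose Suc i) / real N)"
  proof -
    have A1: "real (Suc t) * h (Suc t) / real m = real (m - t) * real (m choose t) * real (N choose i) / real m"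
      unfolding h_def ki using b1 by (metis mult.assoc)
    have A2: "real (m - t) * h t / real N = real (m - t) * real (m choose t) * real (N choose Suc i) / real N"
      unfolding h_def i by (simp add: mult.assoc)
    show ?thesis unfolding kap_def A1 A2 by (simp add: right_diff_distrib)
  qed
  have k2: "kap t * (real m * real N * real (Suc i)) =
      real (m - t) * real (m choose t) * (real N * real (Suc i) * real (N choose i) - real m * (real (Suc i) * real (N choose Suc i)))"
    unfolding k1 using m0 N0 by (simp add: field_simps)
  have "kap t * (real m * real N * real (k - t)) =
      real (m - t) * real (m choose t) * (real N * real (Suc i) * real (N choose i) - real m * (real (Suc i) * real (N choose Suc i)))"
    using k2 i by simp
  also have "\<dots> = real (m - t) * real (m choose t) * real (N choose i) * (real N * real (Suc i) - real m * real (N - i))"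
    using b2 by (simp add: algebra_simps)
  also have "\<dots> = real (m - t) * real (m choose t) * real (N choose i) * sig t"
  proof (cases "i \<le> N")
    case True
    then show ?thesis unfolding sig_def i by (simp add: of_nat_diff)
  next
    case False
    then show ?thesis by simp
  qed
  finally show ?thesis using i by simp
qed

lemma sig_mono: "t \<le> t' \<Longrightarrow> sig t' \<le> sig t"
proof -
  assume "t \<le> t'"
  then have "real (k - t') \<le> real (k - t)" by simp
  moreover have "sig t = (real N + real m) * real (k - t) - real m * (real N + 1)"
     "sig t' = (real N + real m) * real (k - t') - real m * (real N + 1)"
    unfolding sig_def by (simp_all add: algebra_simps)
  ultimately show ?thesis by (smt (verit) mult_left_mono of_nat_0_le_iff)
qed

lemma kap_sign:
  assumes t: "t < m"
  shows "0 \<le> sig t \<Longrightarrow> 0 \<le> kap t" and "sig t \<le> 0 \<Longrightarrow> kap t \<le> 0"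
proof -
  define d where "d = real m * real N * real (k - t)"
  define X where "X = real (m - t) * real (m choose t) * real (N choose (k - t - 1))"
  have pos: "0 < d" unfolding d_def using t mk m1 Npos by simp
  have X: "0 \<le> X" unfolding X_def by simp
  have eq: "kap t * d = X * sig t" unfolding d_def X_def by (rule kap_ident[OF t])
  show "0 \<le> sig t \<Longrightarrow> 0 \<le> kap t"
  proof -
    assume "0 \<le> sig t"
    then have "0 \<le> kap t * d" using eq X by simp
    thus ?thesis using pos by (simp add: zero_le_mult_iff)
  qed
  show "sig t \<le> 0 \<Longrightarrow> kap t \<le> 0"
  proof -
    assume "sig t \<le> 0"
    then have "kap t * d \<le> 0" using eq X by (simp add: mult_nonneg_nonpos)
    thus ?thesis using pos by (simp add: mult_le_0_iff)
  qed
qed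

lemma vand_ext:
  assumes "a \<le> r"
  shows "(\<Sum>t\<le>a. (a choose t) * (N choose (r - t))) = (a + N) choose r"
proof -
  have "(\<Sum>t\<le>a. (a choose t) * (N choose (r - t))) = (\<Sum>t\<le>r. (a choose t) * (N choose (r - t)))"
    using assms by (intro sum.mono_neutral_left) auto
  thus ?thesis by (simp add: vandermonde)
qed

lemma kap_sum: "0 \<le> (\<Sum>t<m. kap t)"
proof -
  obtain m' where m': "m = Suc m'" using m1 by (cases m) auto
  obtain k' where k': "k = Suc k'" using m1 mk by (cases k) auto
  have S1n: "(\<Sum>t<m. Suc t * (m choose Suc t) * (N choose (k - Suc t))) = m * ((m' + N) choose k')"
  proof -
    have per: "Suc t * (m choose Suc t) = m * (m' choose t)" for t
      by (metis binomial_absorption diff_Suc_1 m')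
    have "(\<Sum>t<m. Suc t * (m choose Suc t) * (N choose (k - Suc t))) = (\<Sum>t<m. m * ((m' choose t) * (N choose (k' - t))))"
      by (intro sum.cong refl) (simp only: per k' diff_Suc_Suc mult.assoc)
    also have "\<dots> = (\<Sum>t\<le>m'. m * ((m' choose t) * (N choose (k' - t))))"
      unfolding m' lessThan_Suc_atMost ..
    also have "\<dots> = m * ((m' + N) choose k')"
    proof -
      have "m' \<le> k'" using m' k' mk by simp
      thus ?thesis by (simp only: sum_distrib_left[symmetric] vand_ext)
    qed
    finally show ?thesis .
  qed
  have S2n: "(\<Sum>t<m. (m - t) * (m choose t) * (N choose (k - t))) = m * ((m' + N) choose k)"
  proof -
    have per: "(m - t) * (m choose t) = m * (m' choose t)" for t
      by (metis binomial_absorb_comp diff_Suc_1 m')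
    have "(\<Sum>t<m. (m - t) * (m choose t) * (N choose (k - t))) = (\<Sum>t<m. m * ((m' choose t) * (N choose (k - t))))"
      by (intro sum.cong refl) (simp only: per mult.assoc)
    also have "\<dots> = (\<Sum>t\<le>m'. m * ((m' choose t) * (N choose (k - t))))"
      unfolding m' lessThan_Suc_atMost ..
    also have "\<dots> = m * ((m' + N) choose k)"
    proof -
      have "m' \<le> k" using m' mk by simp
      thus ?thesis by (simp only: sum_distrib_left[symmetric] vand_ext)
    qed
    finally show ?thesis .
  qed
  have S1: "(\<Sum>t<m. real (Suc t) * h (Suc t) / real m) = real ((m' + N) choose k')"
  proof -
    have "(\<Sum>t<m. real (Suc t) * h (Suc t) / real m) = real (\<Sum>t<m. Suc t * (m choose Suc t) * (N choose (k - Suc t))) / real m"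
      unfolding h_def by (simp add: sum_divide_distrib algebra_simps)
    thus ?thesis unfolding S1n using m1 by simp
  qed
  have S2: "(\<Sum>t<m. real (m - t) * h t / real N) = real m * real ((m' + N) choose k) / real N"
  proof -
    have "(\<Sum>t<m. real (m - t) * h t / real N) = real (\<Sum>t<m. (m - t) * (m choose t) * (N choose (k - t))) / real N"
      unfolding h_def by (simp add: sum_divide_distrib mult.assoc)
    thus ?thesis unfolding S2n by simp
  qed
  have ab: "real k * real ((m' + N) choose k) = real (m' + N - k') * real ((m' + N) choose k')"
    using absorb[of k' "m' + N"] k' by (metis of_nat_mult)
  have nk: "real (m' + N - k') = real n - real k" using m' k' kn mn N_def by (simp add: of_nat_diff)
  have ineq: "real m * (real n - real k) \<le> real k * real N"
  proof -
    have "real k * real N - real m * (real n - real k) = real n * (real k - real m)"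
      using N_def mn by (simp add: of_nat_diff algebra_simps)
    moreover have "0 \<le> real n * (real k - real m)" using mk by simp
    ultimately show ?thesis by linarith
  qed
  have "real m * real ((m' + N) choose k) * real k \<le> real ((m' + N) choose k') * real N * real k"
  proof -
    have "real m * real ((m' + N) choose k) * real k = real m * (real n - real k) * real ((m' + N) choose k')"
    proof -
      have "real m * real ((m' + N) choose k) * real k = real m * (real k * real ((m' + N) choose k))" by simp
      also have "\<dots> = real m * (real (m' + N - k') * real ((m' + N) choose k'))" by (simp only: ab)
      also have "\<dots> = real m * (real n - real k) * real ((m' + N) choose k')" by (simp only: nk mult.assoc)
      finally show ?thesis .
    qed
    also have "\<dots> \<le> real k * real N * real ((m' + N) choose k')"
      using ineq by (intro mult_right_mono) auto
    finally show ?thesis by (simp add: algebra_simps)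
  qed
  then have "real m * real ((m' + N) choose k) \<le> real ((m' + N) choose k') * real N"
    using mk m1 by simp
  then have "real m * real ((m' + N) choose k) / real N \<le> real ((m' + N) choose k')"
    using Npos by (simp add: divide_le_eq)
  then show ?thesis unfolding kap_def using S1 S2 by (simp add: sum_subtractf)
qed

lemma D_nonneg:
  assumes y0: "0 \<le> y" and y1: "y \<le> real m * real k / real n"
  shows "0 \<le> D y"
proof -
  define p where "p = y / real m"
  define q where "q = (real k - y) / real N"
  have n0: "0 < real n" using mn by simp
  have yn: "y * real n \<le> real m * real k" using y1 n0 by (simp add: le_divide_eq)
  have Nn: "real N + real m = real n" using N_def mn by (simp add: of_nat_diff)
  have yk: "y < real k"
  proof -
    have "y * real n \<le> real m * real k" by (rule yn)
    moreover have "real m * real k < real n * real k" using mn mk m1 by simp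
    moreover have "real k \<le> y \<Longrightarrow> real n * real k \<le> y * real n" using n0 by (simp add: mult.commute mult_left_mono)
    ultimately show ?thesis by linarith
  qed
  have q0: "0 < q" unfolding q_def using yk Npos by simp
  have p0: "0 \<le> p" unfolding p_def using y0 by simp
  have pq: "p \<le> q"
  proof -
    have e1: "y * real n = y * real N + y * real m" using Nn by (metis distrib_left)
    have e2: "real m * (real k - y) = real m * real k - y * real m" by (simp add: algebra_simps)
    have yN: "y * real N \<le> real m * (real k - y)" using yn e1 e2 by linarith
    have m0: "0 < real m" "0 < real N" using m1 Npos by auto
    show ?thesis unfolding p_def q_def using yN m0 by (simp add: field_simps)
  qed
  define r where "r = p / q"
  have r0: "0 \<le> r" "r \<le> 1" unfolding r_def using p0 q0 pq by auto
  have pr: "p = r * q" unfolding r_def using q0 by simp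
  have "D y = (\<Sum>t<m. kap t * p ^ t * q ^ (m - 1 - t))" unfolding D_eq p_def q_def ..
  also have "\<dots> = (\<Sum>t<m. q ^ (m - 1) * (kap t * r ^ t))"
  proof (intro sum.cong refl)
    fix t assume "t \<in> {..<m}"
    then have "t + (m - 1 - t) = m - 1" by simp
    then have qq: "q ^ t * q ^ (m - 1 - t) = q ^ (m - 1)" by (simp flip: power_add)
    have "kap t * p ^ t * q ^ (m - 1 - t) = kap t * r ^ t * (q ^ t * q ^ (m - 1 - t))"
      unfolding pr power_mult_distrib by (simp only: mult_ac)
    thus "kap t * p ^ t * q ^ (m - 1 - t) = q ^ (m - 1) * (kap t * r ^ t)"
      unfolding qq by (simp only: mult_ac)
  qed
  also have "\<dots> = q ^ (m - 1) * (\<Sum>t<m. kap t * r ^ t)" by (simp add: sum_distrib_left)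
  finally have Deq: "D y = q ^ (m - 1) * (\<Sum>t<m. kap t * r ^ t)" .
  define c where "c = (LEAST t. sig t < 0)"
  have mp: "0 < real m * (real N + 1)" using m1 by simp
  have ex: "sig k < 0" unfolding sig_def using mp by simp
  have sc: "sig c < 0" unfolding c_def by (rule LeastI[of _ k]) (rule ex)
  have "0 \<le> (\<Sum>t<m. kap t * r ^ t)"
  proof (rule cheb[of m c kap r])
    fix t assume "t < m" "t < c"
    then show "0 \<le> kap t" using kap_sign(1) not_less_Least[of t "\<lambda>t. sig t < 0"] unfolding c_def by force
  next
    fix t assume "t < m" "c \<le> t"
    then show "kap t \<le> 0" using kap_sign(2) sig_mono[of c t] sc by force
  qed (use r0 kap_sum in auto)
  then show ?thesis unfolding Deq using q0 by simp
qed

lemma phi_mono: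
  assumes "0 \<le> y1" "y1 \<le> y2" "y2 \<le> real m * real k / real n"
  shows "phi y1 \<le> phi y2"
proof (rule DERIV_nonneg_imp_increasing_open[OF assms(2)])
  fix x assume "y1 < x" "x < y2"
  then show "\<exists>y. (phi has_real_derivative y) (at x) \<and> 0 \<le> y"
    using phi_deriv[of x] D_nonneg[of x] assms by auto
next
  show "continuous_on {y1..y2} phi"
    by (rule continuous_at_imp_continuous_on) (use phi_deriv DERIV_isCont in blast)
qed


end


definition gf :: "nat \<Rightarrow> nat \<Rightarrow> nat \<Rightarrow> real \<Rightarrow> real" where
  "gf m n k = (\<lambda>y::real. \<Sum>\<tau>=0..m.
       real ((n - m) choose (k - \<tau>)) / (real (n - m) ^ (m - \<tau>) * real ((n - m) choose (k - m)))
       * (real (m choose \<tau>) / real m ^ \<tau>) * (real k - y) ^ (m - \<tau>) * y ^ \<tau>)"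

lemma g_eq: "g_fun m n k = Sup (gf m n k ` {real m * real k / real n .. real m})"
  unfolding g_fun_def gf_def ..

lemma gf_phi:
  assumes "mono_setup m n k"
  shows "gf m n k y = mono_setup.phi m n k y / real (mono_setup.N m n choose (k - m))"
proof -
  interpret mono_setup m n k by (rule assms)
  have m0: "0 < real m" using m1 by simp
  have N0: "0 < real N" using Npos by simp
  have C0: "0 < real (N choose (k - m))" using kn mk N_def by simp
  have "gf m n k y = (\<Sum>t\<le>m. h t * (y / real m) ^ t * ((real k - y) / real N) ^ (m - t) / real (N choose (k - m)))"
    unfolding gf_def N_def[symmetric] atLeast0AtMost
    by (intro sum.cong refl) (use m0 N0 C0 in \<open>simp add: h_def power_divide field_simps\<close>)
  also have "\<dots> = phi y / real (N choose (k - m))"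
    unfolding phi_def by (simp add: sum_divide_distrib)
  finally show ?thesis .
qed

lemma gf_cont: "continuous_on A (gf m n k)"
  unfolding gf_def by (intro continuous_intros)

lemma gf_le_g:
  assumes "real m * real k / real n \<le> y" "y \<le> real m"
  shows "gf m n k y \<le> g_fun m n k"
proof -
  have "\<exists>x\<in>{real m * real k / real n .. real m}. \<forall>z\<in>{real m * real k / real n .. real m}. gf m n k z \<le> gf m n k x"
    using assms by (intro continuous_attains_sup gf_cont) auto
  then have "bdd_above (gf m n k ` {real m * real k / real n .. real m})"
    by (auto intro: bdd_aboveI2)
  then show ?thesis unfolding g_eq using assms by (intro cSup_upper) auto
qed

theorem proposition1:
  fixes m n k :: nat and a :: "nat \<Rightarrow> real Matrix.vec" and xh :: "nat \<Rightarrow> real" and wh :: real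
  assumes "1 \<le> m" and "m \<le> k" and "k \<le> n"
    and "\<forall>i\<in>{1..n}. dim_vec (a i) = m"
    and "relax_optimal m n k a xh wh"
    and "T \<subseteq> {1..n}" and "card T = m"
  shows "prob_contains n k xh T \<ge> (1 / g_fun m n k) * (\<Prod>i\<in>T. xh i)"
proof -
  define U where "U = {1..n}"
  define Z where "Z = U - T"
  define x where "x = xh"
  have feas: "relax_feasible m n k a xh wh" using assms(5) unfolding relax_optimal_def by simp
  have xs: "(\<Sum>i\<in>U. x i) = real k" and x01: "\<And>i. i \<in> U \<Longrightarrow> 0 \<le> x i \<and> x i \<le> 1"
    using feas unfolding relax_feasible_def U_def x_def by auto
  have fU: "finite U" unfolding U_def by simp
  have TU: "T \<subseteq> U" using assms(6) U_def by simp
  have fT: "finite T" using TU fU finite_subset by blast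
  have fZ: "finite Z" unfolding Z_def using fU by simp
  have cU: "card U = n" unfolding U_def by simp
  have cZ: "card Z = n - m" unfolding Z_def using cU assms(7) TU fT by (simp add: card_Diff_subset)
  have TZ: "T \<inter> Z = {}" "T \<union> Z = U" unfolding Z_def using TU by auto
  have xT: "\<And>i. i \<in> T \<Longrightarrow> 0 \<le> x i" "\<And>i. i \<in> Z \<Longrightarrow> 0 \<le> x i" using x01 TU Z_def by auto
  define y where "y = (\<Sum>i\<in>T. x i)"
  have sZ: "(\<Sum>i\<in>Z. x i) = real k - y"
    using xs sum.union_disjoint[OF fT fZ TZ(1), of x] TZ(2) y_def by simp
  have y0: "0 \<le> y" unfolding y_def using xT by (simp add: sum_nonneg)
  have ym: "y \<le> real m"
  proof -
    have "y \<le> (\<Sum>i\<in>T. 1)" unfolding y_def using x01 TU by (intro sum_mono) auto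
    thus ?thesis using assms(7) by simp
  qed
  have yk: "y \<le> real k" using ym assms(2) by simp
  have num: "(\<Sum>S\<in>{S. S \<subseteq> U \<and> card S = k \<and> T \<subseteq> S}. \<Prod>j\<in>S. x j) = (\<Prod>i\<in>T. x i) * esym Z x (k - m)"
  proof -
    have "(\<Sum>S\<in>{S. S \<subseteq> U \<and> card S = k \<and> T \<subseteq> S}. \<Prod>j\<in>S. x j) = (\<Sum>S'\<in>{S. S \<subseteq> Z \<and> card S = k - m}. \<Prod>j\<in>T \<union> S'. x j)"
    proof (rule sum.reindex_bij_witness[where i = "\<lambda>S'. T \<union> S'" and j = "\<lambda>S. S - T"])
      fix S assume S: "S \<in> {S. S \<subseteq> U \<and> card S = k \<and> T \<subseteq> S}"
      then show "T \<union> (S - T) = S" by auto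
      have fS: "finite S" using S fU finite_subset by auto
      show "S - T \<in> {S. S \<subseteq> Z \<and> card S = k - m}"
        using S fS fT assms(7) unfolding Z_def by (auto simp: card_Diff_subset)
      show "(\<Prod>j\<in>T \<union> (S - T). x j) = (\<Prod>j\<in>S. x j)" using S by (simp add: Un_absorb1 Un_Diff_cancel)
    next
      fix S' assume S': "S' \<in> {S. S \<subseteq> Z \<and> card S = k - m}"
      then show "T \<union> S' - T = S'" unfolding Z_def by auto
      have fS': "finite S'" using S' fZ finite_subset by auto
      have "card (T \<union> S') = m + (k - m)" using S' fS' fT assms(7) unfolding Z_def
        by (subst card_Un_disjoint) auto
      then show "T \<union> S' \<in> {S. S \<subseteq> U \<and> card S = k \<and> T \<subseteq> S}"
        using S' TU assms(2) unfolding Z_def by auto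
    qed
    also have "\<dots> = (\<Sum>S'\<in>{S. S \<subseteq> Z \<and> card S = k - m}. (\<Prod>i\<in>T. x i) * (\<Prod>j\<in>S'. x j))"
    proof (intro sum.cong refl)
      fix S' assume S': "S' \<in> {S. S \<subseteq> Z \<and> card S = k - m}"
      have fS': "finite S'" using S' fZ finite_subset by auto
      have "T \<inter> S' = {}" using S' unfolding Z_def by auto
      then show "(\<Prod>j\<in>T \<union> S'. x j) = (\<Prod>i\<in>T. x i) * (\<Prod>j\<in>S'. x j)"
        using fT fS' by (simp add: prod.union_disjoint)
    qed
    also have "\<dots> = (\<Prod>i\<in>T. x i) * esym Z x (k - m)"
      unfolding esym_def by (simp add: sum_distrib_left)
    finally show ?thesis .
  qed
  have den: "(\<Sum>S\<in>{S. S \<subseteq> U \<and> card S = k}. \<Prod>i\<in>S. x i) = esym U x k"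
    unfolding esym_def ..
  have prob: "prob_contains n k xh T = (\<Prod>i\<in>T. x i) * esym Z x (k - m) / esym U x k"
    unfolding prob_contains_def U_def[symmetric] x_def[symmetric] num den ..
  have Epos: "0 < esym U x k"
  proof -
    define P where "P = {i\<in>U. 0 < x i}"
    have fP: "finite P" unfolding P_def using fU by simp
    have "real k = (\<Sum>i\<in>P. x i)"
      unfolding xs[symmetric] P_def using fU x01
      by (intro sum.mono_neutral_right) (auto simp: less_le)
    also have "\<dots> \<le> (\<Sum>i\<in>P. 1)" using x01 unfolding P_def by (intro sum_mono) auto
    finally have "k \<le> card P" by simp
    then obtain S where S: "S \<subseteq> P" "card S = k" "finite S" by (rule obtain_subset_with_card_n)
    have Sin: "S \<in> {S. S \<subseteq> U \<and> card S = k}" using S P_def by auto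
    have finS: "finite {S. S \<subseteq> U \<and> card S = k}" by (rule finite_subset[of _ "Pow U"]) (use fU in auto)
    have "0 < (\<Prod>i\<in>S. x i)" using S P_def by (intro prod_pos) auto
    also have "\<dots> \<le> esym U x k" unfolding esym_def
      by (rule member_le_sum[OF Sin]) (use x01 finS in \<open>auto intro!: prod_nonneg\<close>)
    finally show ?thesis .
  qed
  have dec: "esym U x k = (\<Sum>t\<le>m. esym T x t * esym Z x (k - t))"
  proof -
    have "esym U x k = (\<Sum>t\<le>k. esym T x t * esym Z x (k - t))"
      using esym_decomp[OF fT fZ TZ(1)] TZ(2) by simp
    also have "\<dots> = (\<Sum>t\<le>m. esym T x t * esym Z x (k - t))"
      using assms(2,7) fT by (intro sum.mono_neutral_right) (auto simp: esym_big)
    finally show ?thesis .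
  qed
  have boundT: "esym T x t \<le> real (m choose t) * (y / real m) ^ t" if t: "t \<le> m" for t
  proof -
    have "esym T x t / real (m choose t) \<le> (y / real m) ^ (t - 0) * (esym T x 0 / real (m choose 0))"
      using esym_ratio[of T x 0 t, OF fT xT(1)] t assms(7) unfolding y_def by simp
    then have "esym T x t / real (m choose t) \<le> (y / real m) ^ t" using fT by (simp add: esym_0)
    moreover have "0 < real (m choose t)" using t by simp
    ultimately show ?thesis by (simp add: divide_le_eq mult.commute)
  qed
  have boundZ: "esym Z x (k - t) \<le> real ((n - m) choose (k - t)) / (real (n - m) ^ (m - t) * real ((n - m) choose (k - m)))
        * (real k - y) ^ (m - t) * esym Z x (k - m)" if t: "t \<le> m" for t
  proof (cases "n = m")
    case True
    then have km: "k = m" using assms(2,3) by simp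
    have Ze: "Z = {}" using cZ True fZ by simp
    show ?thesis
    proof (cases "t = m")
      case True thus ?thesis using km Ze by (simp add: esym_0)
    next
      case False
      then have "0 < k - t" using t km by simp
      then have "esym Z x (k - t) = 0" using Ze by (simp add: esym_big)
      moreover have "0 \<le> esym Z x (k - m)" using xT(2) by (rule esym_nonneg)
      moreover have "0 \<le> (real k - y) ^ (m - t)" using yk by simp
      ultimately show ?thesis by (simp add: mult_nonneg_nonneg divide_nonneg_nonneg)
    qed
  next
    case False
    then have Npos: "0 < n - m" using assms(3,2) by simp
    have enn: "0 \<le> esym Z x (k - m)" using xT(2) by (rule esym_nonneg)
    have C0: "0 < real ((n - m) choose (k - m))" using assms(2,3) by simp
    show ?thesis
    proof (cases "k - t \<le> n - m")
      case True
      have "esym Z x (k - t) / real ((n - m) choose (k - t)) \<le>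
          ((real k - y) / real (n - m)) ^ ((k - t) - (k - m)) * (esym Z x (k - m) / real ((n - m) choose (k - m)))"
        using esym_ratio[of Z x "k - m" "k - t", OF fZ xT(2)] t True cZ sZ by simp
      moreover have "(k - t) - (k - m) = m - t" using t assms(2) by simp
      moreover have "0 < real ((n - m) choose (k - t))" using True by simp
      ultimately show ?thesis using Npos C0
        by (simp add: divide_le_eq power_divide field_simps)
    next
      case False
      then have "esym Z x (k - t) = 0" using fZ cZ by (simp add: esym_big)
      moreover have "0 \<le> real ((n - m) choose (k - t)) / (real (n - m) ^ (m - t) * real ((n - m) choose (k - m)))
        * (real k - y) ^ (m - t) * esym Z x (k - m)" using yk enn by simp
      ultimately show ?thesis by simp
    qed
  qed
  have main: "esym U x k \<le> gf m n k y * esym Z x (k - m)"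
  proof -
    have "esym U x k \<le> (\<Sum>t\<le>m. (real (m choose t) * (y / real m) ^ t) *
        (real ((n - m) choose (k - t)) / (real (n - m) ^ (m - t) * real ((n - m) choose (k - m)))
        * (real k - y) ^ (m - t) * esym Z x (k - m)))"
      unfolding dec
    proof (intro sum_mono mult_mono)
      fix t assume "t \<in> {..m}"
      then show "esym T x t \<le> real (m choose t) * (y / real m) ^ t" "esym Z x (k - t) \<le> real ((n - m) choose (k - t)) / (real (n - m) ^ (m - t) * real ((n - m) choose (k - m)))
        * (real k - y) ^ (m - t) * esym Z x (k - m)"
        using boundT boundZ by auto
      show "0 \<le> real (m choose t) * (y / real m) ^ t" using y0 by simp
      show "0 \<le> esym Z x (k - t)" using xT(2) by (rule esym_nonneg)
    qed
    also have "\<dots> = gf m n k y * esym Z x (k - m)"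
      unfolding gf_def atLeast0AtMost sum_distrib_right
      by (intro sum.cong refl) (simp add: power_divide mult_ac)
    finally show ?thesis .
  qed
  have gfg: "gf m n k y \<le> g_fun m n k"
  proof (cases "real m * real k / real n \<le> y")
    case True
    then show ?thesis using gf_le_g ym by blast
  next
    case False
    have mn: "m < n"
    proof (rule ccontr)
      assume "\<not> m < n"
      then have nm: "n = m" using assms(2,3) by simp
      then have "Z = {}" using cZ fZ by simp
      then have "y = real k" using sZ by simp
      then show False using False nm assms(1) by simp
    qed
    have ms: "mono_setup m n k" using assms(1,2,3) mn by unfold_locales
    have "gf m n k y \<le> gf m n k (real m * real k / real n)"
    proof -
      interpret mono_setup m n k by (rule ms)
      have C0: "0 < real (N choose (k - m))" using kn mk N_def by simp
      have "phi y \<le> phi (real m * real k / real n)" using y0 False by (intro phi_mono) auto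
      then show ?thesis unfolding gf_phi[OF ms] using C0 by (simp add: divide_right_mono)
    qed
    also have "\<dots> \<le> g_fun m n k"
    proof (rule gf_le_g)
      show "real m * real k / real n \<le> real m" using assms(3) assms(1)
        by (simp add: divide_le_eq mult_left_mono)
    qed simp
    finally show ?thesis .
  qed
  have enn: "0 \<le> esym Z x (k - m)" using xT(2) by (rule esym_nonneg)
  have Pn: "0 \<le> (\<Prod>i\<in>T. x i)" using xT(1) by (simp add: prod_nonneg)
  have key: "esym U x k \<le> g_fun m n k * esym Z x (k - m)"
    using main gfg enn by (meson order_trans mult_right_mono)
  have gpos: "0 < g_fun m n k"
  proof -
    have "0 < g_fun m n k * esym Z x (k - m)" using key Epos by linarith
    thus ?thesis using enn by (simp add: zero_less_mult_iff)
  qed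
  have "(1 / g_fun m n k) * (\<Prod>i\<in>T. x i) \<le> (\<Prod>i\<in>T. x i) * esym Z x (k - m) / esym U x k"
  proof -
    have "(\<Prod>i\<in>T. x i) * esym U x k \<le> (\<Prod>i\<in>T. x i) * (g_fun m n k * esym Z x (k - m))"
      using key Pn by (rule mult_left_mono)
    then show ?thesis using gpos Epos by (simp add: field_simps)
  qed
  then show ?thesis unfolding prob x_def .
qed

end
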